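(* Let $A \in \{-1,0,1\}^{m\times n}$ have pairwise distinct columns $A_1,\dots,A_n$, and let $t \in [0,1)^m$ be such that $\Delta_k(t+A) \le 1$ for $k \in \{1,2\}$. Then every set $E \in \mathcal{E}_A$ is the support of at most two columns of $A$.
   Context: For a real matrix $M$ and $k\ge 1$, $\Delta_k(M)$ denotes the maximum of $|\det(B)|$ over all $k\times k$ submatrices $B$ of $M$. For $t\in\mathbb{R}^m$, $t+A$ is the matrix with columns $t+A_1,\dots,t+A_n$. The support of $y \in \mathbb{R}^m$ is $\mathrm{supp}(y)=\{j\in[m]: y_j\neq 0\}$, and $\mathcal{E}_A = \{\mathrm{supp}(A_i) : i \in [n]\}\subseteq 2^{[m]}$. *)

theory Defs
  imports "HOL-Analysis.Analysis"
begin

text \<open>Matrices of size m x n are represented as functions M :: nat => nat => real,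
  where only the entries M i j with i < m and j < n are relevant.\<close>

definition subdet :: "(nat \<Rightarrow> nat \<Rightarrow> real) \<Rightarrow> nat set \<Rightarrow> nat set \<Rightarrow> real" where
  "subdet M R C =
     (let k = card R; rs = sorted_list_of_set R; cs = sorted_list_of_set C in
      (\<Sum>p | p permutes {..<k}. of_int (sign p) * (\<Prod>i<k. M (rs ! i) (cs ! (p i)))))"

definition Delta :: "nat \<Rightarrow> nat \<Rightarrow> nat \<Rightarrow> (nat \<Rightarrow> nat \<Rightarrow> real) \<Rightarrow> real" where
  "Delta k m n M = Max (insert 0 {\<bar>subdet M R C\<bar> | R C.
      R \<subseteq> {..<m} \<and> C \<subseteq> {..<n} \<and> card R = k \<and> card C = k})"

definition shift_mat :: "(nat \<Rightarrow> real) \<Rightarrow> (nat \<Rightarrow> nat \<Rightarrow> real) \<Rightarrow> (nat \<Rightarrow> nat \<Rightarrow> real)" where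
  "shift_mat t A = (\<lambda>i j. t i + A i j)"

definition col_supp :: "nat \<Rightarrow> (nat \<Rightarrow> nat \<Rightarrow> real) \<Rightarrow> nat \<Rightarrow> nat set" where
  "col_supp m A j = {i. i < m \<and> A i j \<noteq> 0}"

definition supp_sets :: "nat \<Rightarrow> nat \<Rightarrow> (nat \<Rightarrow> nat \<Rightarrow> real) \<Rightarrow> nat set set" where
  "supp_sets m n A = col_supp m A ` {..<n}"

end

theory Submission
  imports Defs
begin

lemma subdet1: "subdet M {i} {j} = M i j"
proof -
  have "{..<Suc 0} = {0::nat}" by auto
  then show ?thesis unfolding subdet_def by (simp add: Let_def)
qed

lemma sum_perm2: "(\<Sum>p | p permutes {..<2::nat}. f p) = f id + f (Transposition.transpose 0 1)"
proof -
  have e: "{..<2::nat} = insert 0 {1}" by auto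
  have "(\<Sum>p | p permutes {..<2::nat}. f p) = (\<Sum>b\<in>insert 0 {1}. \<Sum>q\<in>{p. p permutes {1::nat}}. f (Transposition.transpose 0 b \<circ> q))"
    unfolding e by (rule sum_over_permutations_insert) auto
  also have "\<dots> = f id + f (Transposition.transpose 0 1)"
    by simp
  finally show ?thesis .
qed

lemma subdet2_ord:
  assumes "i < i'" "j < j'"
  shows "subdet M {i,i'} {j,j'} = M i j * M i' j' - M i j' * M i' j"
proof -
  have c: "card {i,i'} = 2" using assms by auto
  have r: "sorted_list_of_set {i,i'} = [i,i']" using assms by (simp add: sorted_list_of_set_insert_remove)
  have s: "sorted_list_of_set {j,j'} = [j,j']" using assms by (simp add: sorted_list_of_set_insert_remove)
  have l: "{..<2::nat} = {0,1}" by auto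
  show ?thesis unfolding subdet_def Let_def c r s sum_perm2
    by (simp add: sign_swap_id l transpose_def)
qed

lemma subdet2:
  assumes "i \<noteq> i'" "j \<noteq> j'"
  shows "\<bar>subdet M {i,i'} {j,j'}\<bar> = \<bar>M i j * M i' j' - M i j' * M i' j\<bar>"
proof -
  have a: "{i,i'} = {i',i}" "{j,j'} = {j',j}" by auto
  show ?thesis
  proof (cases "i < i'")
    case True
    then show ?thesis using assms
      by (cases "j < j'") (auto simp: subdet2_ord a(2)[symmetric] abs_minus_commute mult.commute
           intro: subdet2_ord[of i i' j' j, folded a(2)] | metis a(2) abs_minus_commute mult.commute subdet2_ord linorder_neqE_nat)+
  next
    case False
    then show ?thesis using assms by (metis a abs_minus_commute mult.commute subdet2_ord linorder_neqE_nat)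
  qed
qed

lemma le_Delta:
  assumes "R \<subseteq> {..<m}" "C \<subseteq> {..<n}" "card R = k" "card C = k"
  shows "\<bar>subdet M R C\<bar> \<le> Delta k m n M"
proof -
  have "{\<bar>subdet M R C\<bar> | R C. R \<subseteq> {..<m} \<and> C \<subseteq> {..<n} \<and> card R = k \<and> card C = k}
     \<subseteq> (\<lambda>(R,C). \<bar>subdet M R C\<bar>) ` (Pow {..<m} \<times> Pow {..<n})" by auto
  then have "finite {\<bar>subdet M R C\<bar> | R C. R \<subseteq> {..<m} \<and> C \<subseteq> {..<n} \<and> card R = k \<and> card C = k}"
    by (rule finite_subset) auto
  then show ?thesis unfolding Delta_def by (intro Max_ge) (use assms in auto)
qed

lemma t_zero:
  assumes "i < m" "j < n" "A i j = 1" "0 \<le> t i" "Delta 1 m n (shift_mat t A) \<le> 1"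
  shows "t i = 0"
proof -
  have "\<bar>subdet (shift_mat t A) {i} {j}\<bar> \<le> 1"
    using le_Delta[of "{i}" m "{j}" n 1 "shift_mat t A"] assms by auto
  then show ?thesis using assms by (simp add: subdet1 shift_mat_def)
qed

lemma core:
  assumes "i < m" "i' < m" "i \<noteq> i'" "u < n" "w < n" "u \<noteq> w"
    "A i u \<in> {-1,1}" "A i' u \<in> {-1,1}" "A i w = A i u" "A i' w = - A i' u"
    "t i = 0" "t i' = 0" "Delta 2 m n (shift_mat t A) \<le> 1"
  shows False
proof -
  have "\<bar>subdet (shift_mat t A) {i,i'} {u,w}\<bar> \<le> 1"
    using le_Delta[of "{i,i'}" m "{u,w}" n 2 "shift_mat t A"] assms by auto
  then show False using assms by (auto simp: subdet2 shift_mat_def)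
qed

theorem proposition3p1:
  fixes m n :: nat and A :: "nat \<Rightarrow> nat \<Rightarrow> real" and t :: "nat \<Rightarrow> real"
  assumes entries: "\<forall>i<m. \<forall>j<n. A i j \<in> {-1, 0, 1}"
    and distinct_cols: "\<forall>j<n. \<forall>j'<n. j \<noteq> j' \<longrightarrow> (\<exists>i<m. A i j \<noteq> A i j')"
    and t_range: "\<forall>i<m. 0 \<le> t i \<and> t i < 1"
    and Delta_le: "\<forall>k\<in>{1, 2}. Delta k m n (shift_mat t A) \<le> 1"
  shows "\<forall>E\<in>supp_sets m n A. card {j. j < n \<and> col_supp m A j = E} \<le> 2"
proof
  fix E assume "E \<in> supp_sets m n A"
  show "card {j. j < n \<and> col_supp m A j = E} \<le> 2"
  proof (rule ccontr)
    let ?S = "{j. j < n \<and> col_supp m A j = E}"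
    assume "\<not> card ?S \<le> 2"
    then have "3 \<le> card ?S" by auto
    moreover have "finite ?S" by auto
    ultimately obtain B where "B \<subseteq> ?S" "card B = 3" by (meson obtain_subset_with_card_n)
    then obtain u v w where uvw: "u \<in> ?S" "v \<in> ?S" "w \<in> ?S" "u \<noteq> v" "v \<noteq> w" "u \<noteq> w"
      unfolding card_3_iff by auto
    have D1: "Delta 1 m n (shift_mat t A) \<le> 1" and D2: "Delta 2 m n (shift_mat t A) \<le> 1"
      using Delta_le by auto
    have supp: "\<And>x y i. x \<in> ?S \<Longrightarrow> y \<in> ?S \<Longrightarrow> i < m \<Longrightarrow> A i x \<noteq> 0 \<Longrightarrow> A i y \<noteq> 0"
      by (auto simp: col_supp_def set_eq_iff)
    have pm: "\<And>x i. x \<in> ?S \<Longrightarrow> i < m \<Longrightarrow> A i x \<noteq> 0 \<Longrightarrow> A i x = 1 \<or> A i x = -1"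
      using entries by auto
    have tz: "\<And>x y i. x \<in> ?S \<Longrightarrow> y \<in> ?S \<Longrightarrow> i < m \<Longrightarrow> A i x \<noteq> A i y \<Longrightarrow> A i x \<noteq> 0 \<Longrightarrow> t i = 0"
    proof -
      fix x y i assume a: "x \<in> ?S" "y \<in> ?S" "i < m" "A i x \<noteq> A i y" "A i x \<noteq> 0"
      have "A i y \<noteq> 0" using supp a by blast
      then have "A i x = 1 \<or> A i y = 1" using pm[OF a(1,3,5)] pm[OF a(2,3)] a(4) by auto
      then show "t i = 0" using t_zero[OF a(3) _ _ _ D1] t_range a by auto
    qed
    have key: "\<And>x y z. x \<in> ?S \<Longrightarrow> y \<in> ?S \<Longrightarrow> z \<in> ?S \<Longrightarrow> x \<noteq> y \<Longrightarrow> x \<noteq> z \<Longrightarrow> y \<noteq> z \<Longrightarrow>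
        i < m \<Longrightarrow> A i x \<noteq> A i y \<Longrightarrow> A i z = A i x \<Longrightarrow> False" for i
    proof -
      fix x y z assume a: "x \<in> ?S" "y \<in> ?S" "z \<in> ?S" "x \<noteq> y" "x \<noteq> z" "y \<noteq> z"
        "i < m" "A i x \<noteq> A i y" "A i z = A i x"
      have ix: "A i x \<noteq> 0" using supp[OF a(2,1,7)] supp[OF a(1,2,7)] a(8) by auto
      have ti: "t i = 0" using tz[OF a(1,2,7,8) ix] .
      have "\<exists>i'<m. A i' x \<noteq> A i' z" using distinct_cols a(1,3,5) by auto
      then obtain i' where i': "i' < m" "A i' x \<noteq> A i' z" by blast
      have ix': "A i' x \<noteq> 0" using supp[OF a(3,1) i'(1)] i' by auto
      have iz': "A i' z \<noteq> 0" using supp[OF a(1,3) i'(1)] ix' by auto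
      have ti': "t i' = 0" using tz[OF a(1,3) i' ix'] .
      have "i \<noteq> i'" using i' a by auto
      moreover have "A i' z = - A i' x" using pm[OF a(1) i'(1) ix'] pm[OF a(3) i'(1) iz'] i' by auto
      ultimately show False
        using core[where i=i and i'=i' and u=x and w=z and t=t and A=A and m=m and n=n] pm[OF a(1,7) ix] pm[OF a(1) i'(1) ix'] a ti ti' D2 i'(1)
        by auto
    qed
    have "\<exists>i<m. A i u \<noteq> A i v" using distinct_cols uvw(1,2,4) by auto
    then obtain i where i: "i < m" "A i u \<noteq> A i v" by blast
    show False
    proof (cases "A i w = A i u")
      case True
      then show False using key[OF uvw(1,2,3,4,6,5) i] by auto
    next
      case False
      have nz: "A i u \<noteq> 0"
      proof
        assume "A i u = 0"
        then have "A i v = 0" using supp[OF uvw(2,1) i(1)] by auto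
        with i \<open>A i u = 0\<close> show False by simp
      qed
      have nv: "A i v \<noteq> 0" using supp[OF uvw(1,2) i(1)] nz by auto
      have nw: "A i w \<noteq> 0" using supp[OF uvw(1,3) i(1)] nz by auto
      have "A i w = A i v" using pm[OF uvw(1) i(1) nz] pm[OF uvw(2) i(1) nv] pm[OF uvw(3) i(1) nw] i(2) False
        by auto
      then show False using key[OF uvw(2,1,3) uvw(4)[symmetric] uvw(5,6) i(1)] i by auto
    qed
  qed
qed

end
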